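(* Let $E=[n]$, let $f:2^E\to\mathbb{R}_{\ge0}$ be a submodular function with Lovász extension $F$, and let $d\in\mathbb{R}^n$ be a nonzero direction. Then \[ \max\{\lambda:\ \lambda d\in P(f)\}=\min\{F(x):\ x\in\mathbb{R}^n_{\ge 0},\ d^\top x=1\}. \]
   Context: For $x\in\mathbb{R}^n$ and $S\subseteq E$ write $x(S)=\sum_{i\in S}x_i$. The extended polymatroid is $P(f)=\{x\in\mathbb{R}^n: x(S)\le f(S)\ \forall S\subseteq E\}$ and the base polytope is $B(f)=\{x\in P(f): x(E)=f(E)\}$. The Lovász extension is $F(x)=\max_{v\in B(f)}v^\top x$; equivalently $F(x)=\sum_{i=1}^n x_{\pi_i}(f(S_i)-f(S_{i-1}))$ where $x_{\pi_1}\ge\cdots\ge x_{\pi_n}$ (ties broken lexicographically), $S_i=\{\pi_1,\dots,\pi_i\}$, $S_0=\emptyset$. *)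

theory Defs
  imports Complex_Main "HOL-Library.Extended_Real"
begin

text \<open>Ground set E = [n] is modelled by a finite type 'a (E = UNIV); vectors in R^n are
  functions 'a \<Rightarrow> real.\<close>

definition xsum :: "('a \<Rightarrow> real) \<Rightarrow> 'a set \<Rightarrow> real" where
  "xsum x S = (\<Sum>i\<in>S. x i)"

definition submodular :: "('a set \<Rightarrow> real) \<Rightarrow> bool" where
  "submodular f \<longleftrightarrow> (\<forall>A B. f (A \<union> B) + f (A \<inter> B) \<le> f A + f B)"

definition polymatroid :: "('a set \<Rightarrow> real) \<Rightarrow> ('a \<Rightarrow> real) set" where
  "polymatroid f = {x. \<forall>S. xsum x S \<le> f S}"

definition base_polytope :: "('a::finite set \<Rightarrow> real) \<Rightarrow> ('a \<Rightarrow> real) set" where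
  "base_polytope f = {x \<in> polymatroid f. xsum x UNIV = f UNIV}"

definition lovasz :: "('a::finite set \<Rightarrow> real) \<Rightarrow> ('a \<Rightarrow> real) \<Rightarrow> real" where
  "lovasz f x = Sup ((\<lambda>v. \<Sum>i\<in>UNIV. v i * x i) ` base_polytope f)"

end

theory Submission
  imports Defs
begin

lemma tight_union:
  fixes f :: "'a::finite set \<Rightarrow> real"
  assumes "submodular f" "v \<in> polymatroid f" "xsum v A = f A" "xsum v B = f B"
  shows "xsum v (A \<union> B) = f (A \<union> B)"
proof -
  have "xsum v (A\<union>B) + xsum v (A\<inter>B) = xsum v A + xsum v B"
    unfolding xsum_def by (rule sum.union_inter) auto
  moreover have "f (A\<union>B) + f (A\<inter>B) \<le> f A + f B" using assms(1) unfolding submodular_def by blast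
  moreover have "xsum v (A\<union>B) \<le> f (A\<union>B)" "xsum v (A\<inter>B) \<le> f (A\<inter>B)"
    using assms(2) unfolding polymatroid_def by auto
  ultimately show ?thesis using assms(3,4) by linarith
qed

lemma dom_aux:
  fixes f :: "'a::finite set \<Rightarrow> real"
  assumes "y \<in> polymatroid f" "finite D"
  shows "\<exists>v\<in>polymatroid f. (\<forall>i. y i \<le> v i) \<and> (\<forall>e\<in>D. \<exists>T. e\<in>T \<and> xsum v T = f T)"
  using assms(2)
proof (induction D rule: finite_induct)
  case empty
  then show ?case using assms(1) by auto
next
  case (insert e D)
  then obtain v where vP: "v \<in> polymatroid f" and vy: "\<forall>i. y i \<le> v i"
    and vt: "\<forall>e\<in>D. \<exists>T. e\<in>T \<and> xsum v T = f T" by blast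
  have vle: "xsum v S \<le> f S" for S using vP unfolding polymatroid_def by auto
  define c where "c = Min ((\<lambda>S. f S - xsum v S) ` {S. e\<in>S})"
  have fin: "finite ((\<lambda>S. f S - xsum v S) ` {S. e\<in>S})" by simp
  have ne: "(\<lambda>S. f S - xsum v S) ` {S. e\<in>S} \<noteq> {}" by auto
  have c0: "c \<ge> 0" unfolding c_def using fin ne vle by (auto simp: Min_ge_iff)
  have cle: "c \<le> f S - xsum v S" if "e \<in> S" for S
    unfolding c_def using fin that by (intro Min_le) auto
  obtain S0 where S0: "e \<in> S0" "c = f S0 - xsum v S0"
    using Min_in[OF fin ne] unfolding c_def by auto
  define w where "w = (\<lambda>i. v i + (if i = e then c else 0))"
  have wsum: "xsum w S = xsum v S + (if e \<in> S then c else 0)" for S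
    unfolding w_def xsum_def by (simp add: sum.distrib)
  have wP: "w \<in> polymatroid f"
    unfolding polymatroid_def
  proof (intro CollectI allI)
    fix S show "xsum w S \<le> f S" using wsum[of S] vle[of S] cle[of S] by (cases "e \<in> S") auto
  qed
  have wy: "\<forall>i. y i \<le> w i" using vy c0 unfolding w_def by (auto intro: add_increasing2)
  have wt: "\<forall>e'\<in>insert e D. \<exists>T. e'\<in>T \<and> xsum w T = f T"
  proof
    fix e' assume "e' \<in> insert e D"
    then show "\<exists>T. e'\<in>T \<and> xsum w T = f T"
    proof
      assume "e' = e" then show ?thesis using S0 wsum[of S0] by auto
    next
      assume "e' \<in> D"
      then obtain T where T: "e'\<in>T" "xsum v T = f T" using vt by blast
      have "xsum w T \<le> f T" using wP unfolding polymatroid_def by auto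
      moreover have "xsum w T \<ge> xsum v T" using wsum[of T] c0 by auto
      ultimately show ?thesis using T by (intro exI[of _ T]) auto
    qed
  qed
  show ?case using wP wy wt by blast
qed

lemma dom:
  fixes f :: "'a::finite set \<Rightarrow> real"
  assumes "submodular f" "y \<in> polymatroid f"
  shows "\<exists>v\<in>base_polytope f. \<forall>i. y i \<le> v i"
proof -
  obtain v where vP: "v \<in> polymatroid f" and vy: "\<forall>i. y i \<le> v i"
    and vt: "\<forall>e. \<exists>T. e\<in>T \<and> xsum v T = f T"
    using dom_aux[OF assms(2), of UNIV] by auto
  have "finite D \<Longrightarrow> D \<noteq> {} \<Longrightarrow> \<exists>T. D \<subseteq> T \<and> xsum v T = f T" for D
  proof (induction D rule: finite_ne_induct)
    case (singleton x)
    then show ?case using vt by blast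
  next
    case (insert x F)
    then obtain T where T: "F \<subseteq> T" "xsum v T = f T" by blast
    obtain T' where T': "x \<in> T'" "xsum v T' = f T'" using vt by blast
    have "xsum v (T \<union> T') = f (T \<union> T')" using tight_union[OF assms(1) vP T(2) T'(2)] .
    then show ?case using T T' by (intro exI[of _ "T \<union> T'"]) auto
  qed
  from this[of UNIV] obtain T where "UNIV \<subseteq> T" "xsum v T = f T" by auto
  then have "T = UNIV" by auto
  with \<open>xsum v T = f T\<close> have "xsum v UNIV = f UNIV" by simp
  then show ?thesis using vP vy unfolding base_polytope_def by auto
qed

lemma bdd_lov:
  fixes f :: "'a::finite set \<Rightarrow> real"
  assumes "\<forall>i. x i \<ge> 0"
  shows "bdd_above ((\<lambda>v. \<Sum>i\<in>UNIV. v i * x i) ` base_polytope f)"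
proof (rule bdd_aboveI2)
  fix w assume "w \<in> base_polytope f"
  then have "xsum w {i} \<le> f {i}" for i unfolding base_polytope_def polymatroid_def by auto
  then have "w i \<le> f {i}" for i unfolding xsum_def by auto
  then show "(\<Sum>i\<in>UNIV. w i * x i) \<le> (\<Sum>i\<in>UNIV. f {i} * x i)"
    using assms by (intro sum_mono mult_right_mono) auto
qed

lemma lovasz_ge:
  fixes f :: "'a::finite set \<Rightarrow> real"
  assumes "submodular f" "y \<in> polymatroid f" "\<forall>i. x i \<ge> 0"
  shows "(\<Sum>i\<in>UNIV. y i * x i) \<le> lovasz f x"
proof -
  obtain v where v: "v \<in> base_polytope f" "\<forall>i. y i \<le> v i" using dom[OF assms(1,2)] by blast
  have "(\<Sum>i\<in>UNIV. y i * x i) \<le> (\<Sum>i\<in>UNIV. v i * x i)"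
    using v(2) assms(3) by (intro sum_mono mult_right_mono) auto
  also have "\<dots> \<le> lovasz f x" unfolding lovasz_def
    using v(1) bdd_lov[OF assms(3)] by (intro cSup_upper) auto
  finally show ?thesis .
qed

lemma lovasz_le:
  fixes f :: "'a::finite set \<Rightarrow> real"
  assumes "submodular f" "\<forall>S. f S \<ge> 0" "c \<ge> 0"
  shows "lovasz f (\<lambda>i. if i \<in> S then c else 0) \<le> c * f S"
proof -
  have "(\<lambda>i. 0) \<in> polymatroid f" using assms(2) unfolding polymatroid_def xsum_def by auto
  then obtain v where "v \<in> base_polytope f" using dom[OF assms(1)] by blast
  then have ne: "base_polytope f \<noteq> {}" by auto
  show ?thesis unfolding lovasz_def
  proof (rule cSup_least)
    show "(\<lambda>v. \<Sum>i\<in>UNIV. v i * (if i \<in> S then c else 0)) ` base_polytope f \<noteq> {}" using ne by auto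
  next
    fix r assume "r \<in> (\<lambda>v. \<Sum>i\<in>UNIV. v i * (if i \<in> S then c else 0)) ` base_polytope f"
    then obtain w where w: "w \<in> base_polytope f" "r = (\<Sum>i\<in>UNIV. w i * (if i \<in> S then c else 0))" by auto
    have "r = (\<Sum>i\<in>UNIV. if i \<in> S then c * w i else 0)" unfolding w(2) by (intro sum.cong) auto
    also have "\<dots> = c * xsum w S" unfolding xsum_def by (simp add: sum.If_cases sum_distrib_left)
    also have "\<dots> \<le> c * f S" using w(1) assms(3) unfolding base_polytope_def polymatroid_def
      by (intro mult_left_mono) auto
    finally show "r \<le> c * f S" .
  qed
qed

theorem theorem1:
  fixes f :: "'a::finite set \<Rightarrow> real" and d :: "'a \<Rightarrow> real"
  assumes "submodular f" and "\<forall>S. f S \<ge> 0" and "d \<noteq> (\<lambda>i. 0)"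
  shows "(SUP t\<in>{t. (\<lambda>i. t * d i) \<in> polymatroid f}. ereal t)
           = (INF x\<in>{x. (\<forall>i. x i \<ge> 0) \<and> (\<Sum>i\<in>UNIV. d i * x i) = 1}. ereal (lovasz f x))
         \<and> ((\<exists>i. d i > 0) \<longrightarrow>
              (\<exists>t. (\<lambda>i. t * d i) \<in> polymatroid f \<and>
                   (\<forall>s. (\<lambda>i. s * d i) \<in> polymatroid f \<longrightarrow> s \<le> t)) \<and>
              (\<exists>x. (\<forall>i. x i \<ge> 0) \<and> (\<Sum>i\<in>UNIV. d i * x i) = 1 \<and>
                   (\<forall>y. (\<forall>i. y i \<ge> 0) \<and> (\<Sum>i\<in>UNIV. d i * y i) = 1 \<longrightarrow> lovasz f x \<le> lovasz f y)))"
proof (cases "\<exists>i. d i > 0")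
  case False
  then have dn: "d i \<le> 0" for i by (simp add: not_less)
  have xs: "xsum (\<lambda>i. t * d i) S = t * xsum d S" for t S unfolding xsum_def by (simp add: sum_distrib_left)
  have dS: "xsum d S \<le> 0" for S unfolding xsum_def using dn by (simp add: sum_nonpos)
  have inP: "(\<lambda>i. t * d i) \<in> polymatroid f" if "t \<ge> 0" for t
    unfolding polymatroid_def using xs dS that assms(2)
    by (auto intro: order_trans[OF mult_nonneg_nonpos])
  have "(SUP t\<in>{t. (\<lambda>i. t * d i) \<in> polymatroid f}. ereal t) = \<infinity>"
    by (rule SUP_PInfty) (use inP of_nat_0_le_iff in blast)
  moreover have "{x. (\<forall>i. x i \<ge> 0) \<and> (\<Sum>i\<in>UNIV. d i * x i) = 1} = {}"
  proof -
    have "(\<Sum>i\<in>UNIV. d i * x i) \<le> 0" if "\<forall>i. x i \<ge> 0" for x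
      using dn that by (intro sum_nonpos) (simp add: mult_nonpos_nonneg)
    then show ?thesis
    proof (intro equalityI subsetI)
      fix x assume h: "\<And>x. \<forall>i. 0 \<le> x i \<Longrightarrow> (\<Sum>i\<in>UNIV. d i * x i) \<le> 0"
        and "x \<in> {x. (\<forall>i. x i \<ge> 0) \<and> (\<Sum>i\<in>UNIV. d i * x i) = 1}"
      then show "x \<in> {}" using h[of x] by auto
    qed auto
  qed
  ultimately show ?thesis using False by (simp only: INF_empty top_ereal_def) simp
next
  case True
  then obtain i0 where i0: "d i0 > 0" by blast
  define SS where "SS = {S. xsum d S > 0}"
  have i0S: "{i0} \<in> SS" using i0 unfolding SS_def xsum_def by simp
  define lam where "lam = Min ((\<lambda>S. f S / xsum d S) ` SS)"
  have fin: "finite ((\<lambda>S. f S / xsum d S) ` SS)" by simp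
  have ne: "(\<lambda>S. f S / xsum d S) ` SS \<noteq> {}" using i0S by auto
  obtain S0 where S0: "S0 \<in> SS" "lam = f S0 / xsum d S0" using Min_in[OF fin ne] unfolding lam_def by auto
  have lamle: "lam \<le> f S / xsum d S" if "S \<in> SS" for S unfolding lam_def using fin that by (intro Min_le) auto
  have d0: "xsum d S0 > 0" using S0 unfolding SS_def by auto
  have lam0: "lam \<ge> 0" using S0(2) d0 assms(2) by simp
  have xs: "xsum (\<lambda>i. t * d i) S = t * xsum d S" for t S unfolding xsum_def by (simp add: sum_distrib_left)
  have lamP: "(\<lambda>i. lam * d i) \<in> polymatroid f"
    unfolding polymatroid_def
  proof (intro CollectI allI)
    fix S
    show "xsum (\<lambda>i. lam * d i) S \<le> f S"
    proof (cases "S \<in> SS")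
      case True
      then have p: "xsum d S > 0" unfolding SS_def by auto
      have "lam * xsum d S \<le> f S / xsum d S * xsum d S" using lamle[OF True] p by (intro mult_right_mono) auto
      then show ?thesis using p xs by simp
    next
      case False
      then have "xsum d S \<le> 0" unfolding SS_def by auto
      then have "lam * xsum d S \<le> 0" using lam0 by (simp add: mult_nonneg_nonpos)
      then show ?thesis using xs assms(2) by (metis order_trans)
    qed
  qed
  have lammax: "s \<le> lam" if "(\<lambda>i. s * d i) \<in> polymatroid f" for s
  proof -
    have "s * xsum d S0 \<le> f S0" using that xs unfolding polymatroid_def by auto
    then show ?thesis using S0(2) d0 by (simp add: pos_le_divide_eq)
  qed
  define x0 where "x0 = (\<lambda>i. if i \<in> S0 then 1 / xsum d S0 else 0)"
  have x0nn: "\<forall>i. x0 i \<ge> 0" unfolding x0_def using d0 by auto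
  have x0s: "(\<Sum>i\<in>UNIV. d i * x0 i) = 1"
  proof -
    have "(\<Sum>i\<in>UNIV. d i * x0 i) = (\<Sum>i\<in>UNIV. if i \<in> S0 then d i / xsum d S0 else 0)"
      unfolding x0_def by (intro sum.cong) auto
    also have "\<dots> = (\<Sum>i\<in>S0. d i / xsum d S0)" using sum.inter_restrict[of UNIV "\<lambda>i. d i / xsum d S0" S0] by simp
    also have "\<dots> = xsum d S0 / xsum d S0" unfolding xsum_def by (rule sum_divide_distrib[symmetric])
    finally show ?thesis using d0 by simp
  qed
  have x0le: "lovasz f x0 \<le> lam"
    using lovasz_le[OF assms(1,2), of "1 / xsum d S0" S0] d0 S0(2) unfolding x0_def by simp
  have lovge: "lam \<le> lovasz f y" if "\<forall>i. y i \<ge> 0" "(\<Sum>i\<in>UNIV. d i * y i) = 1" for y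
  proof -
    have "(\<Sum>i\<in>UNIV. lam * d i * y i) \<le> lovasz f y" using lovasz_ge[OF assms(1) lamP that(1)] .
    moreover have "(\<Sum>i\<in>UNIV. lam * d i * y i) = lam * (\<Sum>i\<in>UNIV. d i * y i)"
      by (simp add: sum_distrib_left mult.assoc)
    ultimately show ?thesis using that(2) by simp
  qed
  have sup: "(SUP t\<in>{t. (\<lambda>i. t * d i) \<in> polymatroid f}. ereal t) = ereal lam"
  proof (rule antisym)
    show "(SUP t\<in>{t. (\<lambda>i. t * d i) \<in> polymatroid f}. ereal t) \<le> ereal lam"
      using lammax by (intro SUP_least) auto
    show "ereal lam \<le> (SUP t\<in>{t. (\<lambda>i. t * d i) \<in> polymatroid f}. ereal t)"
      using lamP by (intro SUP_upper2[of lam]) auto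
  qed
  have inf: "(INF x\<in>{x. (\<forall>i. x i \<ge> 0) \<and> (\<Sum>i\<in>UNIV. d i * x i) = 1}. ereal (lovasz f x)) = ereal lam"
  proof (rule antisym)
    show "(INF x\<in>{x. (\<forall>i. x i \<ge> 0) \<and> (\<Sum>i\<in>UNIV. d i * x i) = 1}. ereal (lovasz f x)) \<le> ereal lam"
      using x0nn x0s x0le by (intro INF_lower2[of x0]) auto
    show "ereal lam \<le> (INF x\<in>{x. (\<forall>i. x i \<ge> 0) \<and> (\<Sum>i\<in>UNIV. d i * x i) = 1}. ereal (lovasz f x))"
      using lovge by (intro INF_greatest) auto
  qed
  show ?thesis
  proof (intro conjI impI)
    show "(SUP t\<in>{t. (\<lambda>i. t * d i) \<in> polymatroid f}. ereal t)
           = (INF x\<in>{x. (\<forall>i. x i \<ge> 0) \<and> (\<Sum>i\<in>UNIV. d i * x i) = 1}. ereal (lovasz f x))"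
      unfolding sup inf ..
    show "\<exists>t. (\<lambda>i. t * d i) \<in> polymatroid f \<and> (\<forall>s. (\<lambda>i. s * d i) \<in> polymatroid f \<longrightarrow> s \<le> t)"
      using lamP lammax by blast
    show "\<exists>x. (\<forall>i. x i \<ge> 0) \<and> (\<Sum>i\<in>UNIV. d i * x i) = 1 \<and>
                   (\<forall>y. (\<forall>i. y i \<ge> 0) \<and> (\<Sum>i\<in>UNIV. d i * y i) = 1 \<longrightarrow> lovasz f x \<le> lovasz f y)"
    proof (intro exI[of _ x0] conjI allI impI)
      fix y assume "(\<forall>i. y i \<ge> 0) \<and> (\<Sum>i\<in>UNIV. d i * y i) = 1"
      then show "lovasz f x0 \<le> lovasz f y" using x0le lovge[of y] by force
    qed (use x0nn x0s in auto)
  qed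
qed

end
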